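(* Let $\mathcal{A}$ be an alphabet with $d\ge3$ letters, $B\in\mathcal{A}$, $\mathcal{A}'=\mathcal{A}\setminus\{B\}$, let $\pi$ be an irreducible permutation on $\mathcal{A}$, and let $\pi'$ be obtained from $\pi$ by removing $B$ from the top and bottom rows; assume $\pi'$ is irreducible. Then either $g(\pi)=g(\pi')$ or $g(\pi)=g(\pi')+1$. Moreover, the following are equivalent: (1) $g(\pi)=g(\pi')$; (2) $H(\pi)$ is spanned by $\{\Omega(\pi)e_x: x\in\mathcal{A}'\}$; (3) $e_B\notin H(\pi)$; (4) $e_B$ does not belong to the span of $\{\Omega(\pi)e_x: x\in\mathcal{A}'\}$; (5) the natural projection $P:\mathbb{R}^{\mathcal{A}}\to\mathbb{R}^{\mathcal{A}'}$ restricts to a symplectic isomorphism $(H(\pi),\omega_\pi)\to(H(\pi'),\omega_{\pi'})$.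
   Context: A permutation on $\mathcal{A}$ is a pair $\pi=(\pi_0,\pi_1)$ of bijections $\mathcal{A}\to\{1,\dots,\#\mathcal{A}\}$ (top and bottom rows); irreducible means no $1\le k<\#\mathcal{A}$ with $\pi_0^{-1}(\{1,\dots,k\})=\pi_1^{-1}(\{1,\dots,k\})$. $\Omega(\pi)$ is the operator on $\mathbb{R}^{\mathcal{A}}$ (canonical basis $e_x$) with $\langle\Omega(\pi)e_x,e_y\rangle=1$ if $\pi_0(x)>\pi_0(y),\pi_1(x)<\pi_1(y)$; $-1$ if $\pi_0(x)<\pi_0(y),\pi_1(x)>\pi_1(y)$; $0$ otherwise. $H(\pi)=\Omega(\pi)\mathbb{R}^{\mathcal{A}}$, $2g(\pi)=\dim H(\pi)$, and $\omega_\pi(\Omega(\pi)u,\Omega(\pi)v)=\langle u,\Omega(\pi)v\rangle$ is a symplectic form on $H(\pi)$; similarly for $\pi'$ on $\mathbb{R}^{\mathcal{A}'}$. *)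

theory Defs
  imports "HOL-Analysis.Analysis"
begin

text \<open>The alphabet is modelled as a finite type 'a (the alphabet is UNIV),
  and a sub-alphabet by a carrier set S.  The space R^S is modelled as the coordinate
  subspace of real^'a of vectors vanishing outside S.  A permutation on S is a pair
  (p0,p1) of maps 'a => nat which are bijections S -> {1..card S} (values outside S
  are irrelevant).\<close>

definition is_perm_on :: "'a set \<Rightarrow> ('a \<Rightarrow> nat) \<times> ('a \<Rightarrow> nat) \<Rightarrow> bool" where
  "is_perm_on S p \<longleftrightarrow> bij_betw (fst p) S {1..card S} \<and> bij_betw (snd p) S {1..card S}"

definition irreducible_perm :: "'a set \<Rightarrow> ('a \<Rightarrow> nat) \<times> ('a \<Rightarrow> nat) \<Rightarrow> bool" where
  "irreducible_perm S p \<longleftrightarrow> is_perm_on S p \<and>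
     \<not> (\<exists>k. 1 \<le> k \<and> k < card S \<and>
           {x\<in>S. fst p x \<in> {1..k}} = {x\<in>S. snd p x \<in> {1..k}})"

definition remove_row :: "('a \<Rightarrow> nat) \<Rightarrow> 'a \<Rightarrow> ('a \<Rightarrow> nat)" where
  "remove_row r B = (\<lambda>x. if r x < r B then r x else r x - 1)"

definition remove_letter :: "('a \<Rightarrow> nat) \<times> ('a \<Rightarrow> nat) \<Rightarrow> 'a \<Rightarrow> ('a \<Rightarrow> nat) \<times> ('a \<Rightarrow> nat)" where
  "remove_letter p B = (remove_row (fst p) B, remove_row (snd p) B)"

definition omega_entry :: "('a \<Rightarrow> nat) \<times> ('a \<Rightarrow> nat) \<Rightarrow> 'a \<Rightarrow> 'a \<Rightarrow> real" where
  "omega_entry p x y =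
     (if fst p x > fst p y \<and> snd p x < snd p y then 1
      else if fst p x < fst p y \<and> snd p x > snd p y then -1 else 0)"

definition vecs :: "'a::finite set \<Rightarrow> (real^'a) set" where
  "vecs S = {v. \<forall>x. x \<notin> S \<longrightarrow> v $ x = 0}"

definition Omega :: "'a::finite set \<Rightarrow> ('a \<Rightarrow> nat) \<times> ('a \<Rightarrow> nat) \<Rightarrow> real^'a \<Rightarrow> real^'a" where
  "Omega S p v = (\<chi> y. if y \<in> S then (\<Sum>x\<in>S. v $ x * omega_entry p x y) else 0)"

definition Hsp :: "'a::finite set \<Rightarrow> ('a \<Rightarrow> nat) \<times> ('a \<Rightarrow> nat) \<Rightarrow> (real^'a) set" where
  "Hsp S p = Omega S p ` vecs S"

definition genus :: "'a::finite set \<Rightarrow> ('a \<Rightarrow> nat) \<times> ('a \<Rightarrow> nat) \<Rightarrow> real" where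
  "genus S p = real (dim (Hsp S p)) / 2"

text \<open>omega_p(Omega u, Omega v) = <u, Omega v>.\<close>
definition omega_form :: "'a::finite set \<Rightarrow> ('a \<Rightarrow> nat) \<times> ('a \<Rightarrow> nat) \<Rightarrow> real^'a \<Rightarrow> real^'a \<Rightarrow> real" where
  "omega_form S p h1 h2 = (SOME u. u \<in> vecs S \<and> Omega S p u = h1) \<bullet> h2"

definition proj :: "'a::finite \<Rightarrow> real^'a \<Rightarrow> real^'a" where
  "proj B v = (\<chi> x. if x = B then 0 else v $ x)"

end

theory Submission
  imports Defs
begin

lemma omega_antisym: "omega_entry p y x = - omega_entry p x y"
  by (auto simp: omega_entry_def)

lemma Omega_comp: "Omega S p v $ y = (if y \<in> S then (\<Sum>x\<in>S. v$x * omega_entry p x y) else 0)"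
  by (simp add: Omega_def)

lemma linear_Omega: "linear (Omega S p)"
  by (rule linearI) (auto simp: vec_eq_iff Omega_comp sum.distrib sum_distrib_left algebra_simps)

lemma ifz1: "(if P then a else 0) * (b::real) = (if P then a * b else 0)" by simp
lemma ifz2: "(b::real) * (if P then a else 0) = (if P then b * a else 0)" by simp

lemma Omega_inner:
  fixes S :: "'a::finite set"
  shows "Omega S p u \<bullet> w = - (u \<bullet> Omega S p w)"
proof -
  have "Omega S p u \<bullet> w = (\<Sum>y\<in>S. \<Sum>x\<in>S. u$x * omega_entry p x y * w$y)"
    unfolding inner_vec_def Omega_comp
    by (simp add: ifz1 sum.If_cases sum_distrib_right)
  also have "\<dots> = (\<Sum>x\<in>S. \<Sum>y\<in>S. u$x * omega_entry p x y * w$y)"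
    by (rule sum.swap)
  also have "\<dots> = - (\<Sum>x\<in>S. \<Sum>y\<in>S. u$x * (w$y * omega_entry p y x))"
  proof -
    have e: "u$x * omega_entry p x y * w$y = - (u$x * (w$y * omega_entry p y x))" for x y
      by (simp add: omega_antisym[of p y x])
    show ?thesis by (simp only: e sum_negf)
  qed
  also have "- (\<Sum>x\<in>S. \<Sum>y\<in>S. u$x * (w$y * omega_entry p y x)) = - (u \<bullet> Omega S p w)"
    unfolding inner_vec_def Omega_comp
    by (simp add: ifz2 sum.If_cases sum_distrib_left)
  finally show ?thesis .
qed

lemma Omega_self: "Omega S p u \<bullet> u = 0"
  using Omega_inner[of S p u u] by (simp add: inner_commute)

lemma vecs_span: "vecs S = span {axis x 1 | x. x \<in> S}"
proof
  show "vecs S \<subseteq> span {axis x 1 | x. x \<in> S}"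
  proof
    fix v assume v: "v \<in> vecs S"
    have "v = (\<Sum>x\<in>S. v$x *\<^sub>R axis x 1)"
      using v by (auto simp: vec_eq_iff vecs_def axis_def if_distrib sum.If_cases cong: if_cong)
    also have "\<dots> \<in> span {axis x 1 | x. x \<in> S}"
      by (intro span_sum span_scale span_base) auto
    finally show "v \<in> span {axis x 1 | x. x \<in> S}" .
  qed
next
  have "subspace (vecs S)"
    by (auto simp: subspace_def vecs_def)
  then show "span {axis x 1 | x. x \<in> S} \<subseteq> vecs S"
    by (rule span_minimal[rotated]) (auto simp: vecs_def axis_def)
qed

lemma Hsp_span: "Hsp S p = span {Omega S p (axis x 1) | x. x \<in> S}"
proof -
  have "{Omega S p (axis x 1) | x. x \<in> S} = Omega S p ` {axis x 1 | x. x \<in> S}" by auto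
  then show ?thesis
    by (simp add: Hsp_def vecs_span linear_span_image[OF linear_Omega])
qed

lemma Omega_image_span: "Omega T p ` vecs S = span {Omega T p (axis x 1) | x. x \<in> S}"
proof -
  have "{Omega T p (axis x 1) | x. x \<in> S} = Omega T p ` {axis x 1 | x. x \<in> S}" by auto
  then show ?thesis
    by (simp add: vecs_span linear_span_image[OF linear_Omega])
qed

lemma remove_row_less:
  assumes "inj r" "x \<noteq> B" "y \<noteq> B"
  shows "remove_row r B x < remove_row r B y \<longleftrightarrow> r x < r y"
proof -
  have "r x \<noteq> r B" "r y \<noteq> r B" using assms by (auto dest: injD)
  then show ?thesis unfolding remove_row_def by auto
qed

lemma omega_entry_remove:
  assumes "inj (fst p)" "inj (snd p)" "x \<noteq> B" "y \<noteq> B"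
  shows "omega_entry (remove_letter p B) x y = omega_entry p x y"
  using assms remove_row_less[of "fst p" x B y] remove_row_less[of "fst p" y B x]
    remove_row_less[of "snd p" x B y] remove_row_less[of "snd p" y B x]
  by (simp add: omega_entry_def remove_letter_def)

lemma linear_proj: "linear (proj B)"
  by (rule linearI) (auto simp: vec_eq_iff proj_def)

lemma Omega_remove:
  fixes p :: "('a::finite \<Rightarrow> nat) \<times> ('a \<Rightarrow> nat)"
  assumes "inj (fst p)" "inj (snd p)" "u \<in> vecs (UNIV - {B})"
  shows "Omega (UNIV - {B}) (remove_letter p B) u = proj B (Omega UNIV p u)"
proof -
  have uB: "u $ B = 0" using assms(3) by (simp add: vecs_def)
  show ?thesis
  proof (rule iffD2[OF vec_eq_iff], rule allI)
    fix y
    show "Omega (UNIV - {B}) (remove_letter p B) u $ y = proj B (Omega UNIV p u) $ y"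
    proof (cases "y = B")
      case True then show ?thesis by (simp add: Omega_comp proj_def)
    next
      case False
      have "(\<Sum>x\<in>UNIV. u$x * omega_entry p x y) = u$B * omega_entry p B y + (\<Sum>x\<in>UNIV-{B}. u$x * omega_entry p x y)"
        by (simp add: sum.remove)
      then show ?thesis using False uB assms(1,2)
        by (simp add: Omega_comp proj_def omega_entry_remove)
    qed
  qed
qed

lemma omega_form_eq:
  assumes "u1 \<in> vecs S" "Omega S p u1 = h1" "Omega S p w2 = h2"
  shows "omega_form S p h1 h2 = u1 \<bullet> h2"
proof -
  define u where "u = (SOME u. u \<in> vecs S \<and> Omega S p u = h1)"
  have "u \<in> vecs S \<and> Omega S p u = h1"
    unfolding u_def by (rule someI[of _ u1]) (use assms in auto)
  then have "u \<bullet> h2 = u1 \<bullet> h2"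
    using assms Omega_inner[of S p u w2] Omega_inner[of S p u1 w2] by simp
  then show ?thesis by (simp add: omega_form_def u_def)
qed


lemma main_facts:
  fixes p :: "('a::finite \<Rightarrow> nat) \<times> ('a \<Rightarrow> nat)" and B :: 'a
  assumes inj0: "inj (fst p)" and inj1: "inj (snd p)"
  defines "R0 \<equiv> {Omega UNIV p (axis x 1) | x. x \<noteq> B}"
  defines "rB \<equiv> Omega UNIV p (axis B 1)"
  defines "eB \<equiv> (axis B 1 :: real^'a)"
  defines "K \<equiv> vecs (UNIV - {B})"
  shows "Omega UNIV p ` K = span R0"
    and "Hsp UNIV p = span (insert rB R0)"
    and "Hsp (UNIV - {B}) (remove_letter p B) = proj B ` span R0"
    and "rB \<in> span R0 \<longleftrightarrow> eB \<notin> span R0"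
proof -
  show F1: "Omega UNIV p ` K = span R0"
  proof -
    have "{Omega UNIV p (axis x 1) | x. x \<in> UNIV - {B}} = R0" unfolding R0_def by auto
    then show ?thesis using Omega_image_span[of UNIV p "UNIV - {B}"]
      unfolding K_def by simp
  qed
  show "Hsp UNIV p = span (insert rB R0)"
  proof -
    have "{Omega UNIV p (axis x 1) | x. x \<in> UNIV} = insert rB R0" unfolding R0_def rB_def by auto
    then show ?thesis using Hsp_span[of UNIV p] by simp
  qed
  show "Hsp (UNIV - {B}) (remove_letter p B) = proj B ` span R0"
  proof -
    have "Hsp (UNIV - {B}) (remove_letter p B) = (\<lambda>u. proj B (Omega UNIV p u)) ` K"
      unfolding Hsp_def K_def using Omega_remove[OF inj0 inj1] by (auto simp: image_def)
    also have "\<dots> = proj B ` (Omega UNIV p ` K)" by (simp add: image_image)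
    finally show ?thesis using F1 by simp
  qed
  have KB: "v \<in> K \<longleftrightarrow> v $ B = 0" for v unfolding K_def vecs_def by auto
  have eBB: "eB $ B = 1" unfolding eB_def by simp
  show "rB \<in> span R0 \<longleftrightarrow> eB \<notin> span R0"
  proof
    assume rB: "rB \<in> span R0"
    show "eB \<notin> span R0"
    proof
      assume "eB \<in> span R0"
      then obtain u where u: "u \<in> K" "Omega UNIV p u = eB" using F1 by (metis imageE)
      obtain w where w: "w \<in> K" "Omega UNIV p w = rB" using F1 rB by (metis imageE)
      have "1 = eB \<bullet> eB" unfolding eB_def by (simp add: inner_axis_axis)
      also have "\<dots> = - (u \<bullet> rB)" using Omega_inner[of UNIV p u eB] u unfolding rB_def eB_def by simp
      also have "\<dots> = Omega UNIV p u \<bullet> w" using Omega_inner[of UNIV p u w] w by simp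
      also have "\<dots> = w $ B" using u unfolding eB_def by (simp add: inner_commute inner_axis)
      also have "\<dots> = 0" using w KB by simp
      finally show False by simp
    qed
  next
    assume eB: "eB \<notin> span R0"
    show "rB \<in> span R0"
    proof (rule ccontr)
      assume rB: "rB \<notin> span R0"
      have "span R0 \<subset> span (insert rB R0)"
        using rB by (metis insert_subset span_mono span_superset psubsetI span_base subset_insertI insertI1)
      then obtain z where z: "z \<noteq> 0" "z \<in> span (insert rB R0)" "\<And>y. y \<in> span R0 \<Longrightarrow> orthogonal z y"
        by (rule orthogonal_to_subspace_exists_gen) blast+
      obtain k where k: "z - k *\<^sub>R rB \<in> span R0" using z(2) span_breakdown_eq by blast
      have "z \<bullet> z = z \<bullet> (z - k *\<^sub>R rB) + k * (z \<bullet> rB)" by (simp add: inner_diff_right)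
      also have "z \<bullet> (z - k *\<^sub>R rB) = 0" using z(3)[OF k] by (simp add: orthogonal_def)
      finally have zz: "z \<bullet> z = k * (z \<bullet> rB)" by simp
      have zrB: "z \<bullet> rB \<noteq> 0" using zz z(1) by auto
      define c where "c = Omega UNIV p z $ B"
      have Oz: "Omega UNIV p z = c *\<^sub>R eB"
      proof (rule iffD2[OF vec_eq_iff], rule allI)
        fix x
        show "Omega UNIV p z $ x = (c *\<^sub>R eB) $ x"
        proof (cases "x = B")
          case True then show ?thesis by (simp add: c_def eB_def)
        next
          case False
          have "axis x 1 \<in> K" using False KB by (simp add: axis_def)
          then have "Omega UNIV p (axis x 1) \<in> span R0" using F1 by blast
          then have "z \<bullet> Omega UNIV p (axis x 1) = 0" using z(3) by (simp add: orthogonal_def)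
          then have "Omega UNIV p z \<bullet> axis x 1 = 0" using Omega_inner[of UNIV p z "axis x 1"] by simp
          then show ?thesis using False by (simp add: inner_axis eB_def) (simp add: axis_def)
        qed
      qed
      have "z \<bullet> rB = - (Omega UNIV p z \<bullet> eB)" using Omega_inner[of UNIV p z eB] unfolding rB_def eB_def by simp
      also have "\<dots> = - c" using Oz eBB unfolding eB_def by (simp add: inner_axis)
      finally have cnz: "c \<noteq> 0" using zrB by simp
      have "0 = Omega UNIV p z \<bullet> z" by (simp add: Omega_self)
      also have "\<dots> = c * z $ B" using Oz unfolding eB_def by (simp add: inner_commute inner_axis)
      finally have "z $ B = 0" using cnz by simp
      then have "z \<in> K" using KB by simp
      then have "Omega UNIV p z \<in> span R0" using F1 by blast
      then have "(1/c) *\<^sub>R Omega UNIV p z \<in> span R0" by (rule span_scale)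
      then have "eB \<in> span R0" using Oz cnz by simp
      then show False using eB by simp
    qed
  qed
qed


lemma proj_decomp: "v = proj B v + (v $ B) *\<^sub>R axis B (1::real)"
  by (simp add: vec_eq_iff proj_def axis_def)

lemma proj_inj:
  assumes V: "subspace V" and eB: "axis B (1::real) \<notin> V"
  shows "inj_on (proj B) V"
proof (rule inj_onI)
  fix v w assume vw: "v \<in> V" "w \<in> V" "proj B v = proj B w"
  have d: "v - w = ((v - w) $ B) *\<^sub>R axis B 1"
    using vw(3) by (simp add: vec_eq_iff proj_def axis_def) (metis)
  have "(v - w) $ B = 0"
  proof (rule ccontr)
    assume c: "(v - w) $ B \<noteq> 0"
    have "v - w \<in> V" using V vw by (simp add: subspace_diff)
    then have "(1 / (v - w) $ B) *\<^sub>R (v - w) \<in> V" using V by (simp add: subspace_scale)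
    also have "(1 / (v - w) $ B) *\<^sub>R (v - w) = axis B 1" using c by (subst d) simp
    finally show False using eB by simp
  qed
  then show "v = w" using d by simp
qed

lemma proj_dim:
  assumes V: "subspace V" and eB: "axis B (1::real) \<in> V"
  shows "dim V = dim (proj B ` V) + 1"
proof -
  have PV: "proj B ` V \<subseteq> V"
  proof
    fix u assume "u \<in> proj B ` V"
    then obtain v where v: "v \<in> V" "u = proj B v" by auto
    have "u = v - (v $ B) *\<^sub>R axis B 1" using v(2) by (simp add: vec_eq_iff proj_def axis_def)
    then show "u \<in> V" using V v eB by (simp add: subspace_diff subspace_scale)
  qed
  have eq: "span (insert (axis B 1) (proj B ` V)) = V"
  proof
    show "span (insert (axis B 1) (proj B ` V)) \<subseteq> V"
      by (rule span_minimal) (use PV eB V in auto)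
    show "V \<subseteq> span (insert (axis B 1) (proj B ` V))"
    proof
      fix v assume v: "v \<in> V"
      have "proj B v + (v $ B) *\<^sub>R axis B 1 \<in> span (insert (axis B 1) (proj B ` V))"
      proof -
        have a: "proj B v \<in> span (insert (axis B 1) (proj B ` V))" by (rule span_base) (use v in auto)
        have b: "axis B 1 \<in> span (insert (axis B 1) (proj B ` V))" by (rule span_base) simp
        show ?thesis by (rule span_add[OF a span_scale[OF b]])
      qed
      moreover have "proj B v + (v $ B) *\<^sub>R axis B 1 = v" by (rule proj_decomp[symmetric])
      ultimately show "v \<in> span (insert (axis B 1) (proj B ` V))" by simp
    qed
  qed
  have "span (proj B ` V) = proj B ` V"
    by (simp only: linear_span_image[OF linear_proj] span_eq_iff[THEN iffD2, OF V])
  moreover have "axis B 1 \<notin> proj B ` V"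
  proof
    assume "axis B (1::real) \<in> proj B ` V"
    then obtain v where "axis B 1 = proj B v" by auto
    then have "axis B (1::real) $ B = proj B v $ B" by simp
    then show False by (simp add: proj_def)
  qed
  ultimately have "axis B 1 \<notin> span (proj B ` V)" by (simp only: not_False_eq_True)
  then have "dim (insert (axis B 1) (proj B ` V)) = dim (proj B ` V) + 1"
    by (simp add: dim_insert)
  then show ?thesis using eq dim_span by metis
qed

theorem lemma5p3:
  fixes p :: "('a::finite \<Rightarrow> nat) \<times> ('a \<Rightarrow> nat)" and B :: 'a
  assumes "CARD('a) \<ge> 3"
    and "irreducible_perm UNIV p"
    and "irreducible_perm (UNIV - {B}) (remove_letter p B)"
  shows "(genus UNIV p = genus (UNIV - {B}) (remove_letter p B)
          \<or> genus UNIV p = genus (UNIV - {B}) (remove_letter p B) + 1)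
    \<and> (genus UNIV p = genus (UNIV - {B}) (remove_letter p B)
         \<longleftrightarrow> Hsp UNIV p = span {Omega UNIV p (axis x 1) | x. x \<noteq> B})
    \<and> (genus UNIV p = genus (UNIV - {B}) (remove_letter p B)
         \<longleftrightarrow> axis B 1 \<notin> Hsp UNIV p)
    \<and> (genus UNIV p = genus (UNIV - {B}) (remove_letter p B)
         \<longleftrightarrow> axis B 1 \<notin> span {Omega UNIV p (axis x 1) | x. x \<noteq> B})
    \<and> (genus UNIV p = genus (UNIV - {B}) (remove_letter p B)
         \<longleftrightarrow> (bij_betw (proj B) (Hsp UNIV p) (Hsp (UNIV - {B}) (remove_letter p B))
              \<and> (\<forall>h1\<in>Hsp UNIV p. \<forall>h2\<in>Hsp UNIV p.
                   omega_form (UNIV - {B}) (remove_letter p B) (proj B h1) (proj B h2)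
                   = omega_form UNIV p h1 h2)))"
proof -
  have pp: "is_perm_on UNIV p" using assms(2) by (simp add: irreducible_perm_def)
  have inj0: "inj (fst p)" and inj1: "inj (snd p)"
    using pp unfolding is_perm_on_def by (auto dest: bij_betw_imp_inj_on)
  note MF = main_facts[OF inj0 inj1, of B]
  define R0 where "R0 = {Omega UNIV p (axis x 1) | x. x \<noteq> B}"
  define R where "R = span R0"
  define rB where "rB = Omega UNIV p (axis B 1)"
  define eB where "eB = (axis B 1 :: real^'a)"
  define p' where "p' = remove_letter p B"
  have F1: "Omega UNIV p ` vecs (UNIV - {B}) = R" using MF(1) unfolding R_def R0_def by simp
  have F2: "Hsp UNIV p = span (insert rB R0)" using MF(2) unfolding rB_def R0_def by simp
  have F3: "Hsp (UNIV - {B}) p' = proj B ` R" using MF(3) unfolding R_def R0_def p'_def by simp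
  have F4: "rB \<in> R \<longleftrightarrow> eB \<notin> R" using MF(4) unfolding R_def R0_def rB_def eB_def by simp
  have sR: "subspace R" by (simp add: R_def)
  have RH: "R \<subseteq> Hsp UNIV p" unfolding F2 R_def by (intro span_mono) auto
  have rBH: "rB \<in> Hsp UNIV p" unfolding F2 by (intro span_base) auto
  have R0': "{Omega UNIV p (axis x 1) | x. x \<noteq> B} = R0" by (simp add: R0_def)
  have main: "(genus UNIV p = genus (UNIV - {B}) p'
          \<or> genus UNIV p = genus (UNIV - {B}) p' + 1)
    \<and> (genus UNIV p = genus (UNIV - {B}) p'
         \<longleftrightarrow> Hsp UNIV p = R)
    \<and> (genus UNIV p = genus (UNIV - {B}) p'
         \<longleftrightarrow> eB \<notin> Hsp UNIV p)
    \<and> (genus UNIV p = genus (UNIV - {B}) p'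
         \<longleftrightarrow> eB \<notin> R)
    \<and> (genus UNIV p = genus (UNIV - {B}) p'
         \<longleftrightarrow> (bij_betw (proj B) (Hsp UNIV p) (Hsp (UNIV - {B}) p')
              \<and> (\<forall>h1\<in>Hsp UNIV p. \<forall>h2\<in>Hsp UNIV p.
                   omega_form (UNIV - {B}) p' (proj B h1) (proj B h2)
                   = omega_form UNIV p h1 h2)))"
  proof (cases "eB \<in> R")
    case True
    then have rBn: "rB \<notin> R" using F4 by simp
    have "dim (Hsp UNIV p) = dim R + 1"
      unfolding F2 R_def using rBn by (simp add: dim_insert R_def)
    moreover have "dim R = dim (Hsp (UNIV - {B}) p') + 1"
      unfolding F3 using proj_dim[OF sR] True by (simp add: eB_def)
    ultimately have g: "genus UNIV p = genus (UNIV - {B}) p' + 1"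
      unfolding genus_def by simp
    have n2: "Hsp UNIV p \<noteq> R" using rBH rBn by auto
    have n3: "eB \<in> Hsp UNIV p" using RH True by auto
    have n5: "\<not> inj_on (proj B) (Hsp UNIV p)"
    proof
      assume "inj_on (proj B) (Hsp UNIV p)"
      moreover have "0 \<in> Hsp UNIV p" unfolding F2 by (simp add: span_zero)
      moreover have "proj B eB = proj B 0" by (simp add: eB_def proj_def vec_eq_iff axis_def)
      ultimately have "eB = 0" using n3 by (metis inj_onD)
      then show False by (simp add: eB_def)
    qed
    show ?thesis using g n2 n3 n5 True by (auto simp: bij_betw_def)
  next
    case False
    then have rBi: "rB \<in> R" using F4 by simp
    have HR: "Hsp UNIV p = R" unfolding F2 R_def using rBi by (simp add: span_redundant R_def)
    have inj: "inj_on (proj B) R" using proj_inj[OF sR] False by (simp add: eB_def)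
    have "dim (Hsp (UNIV - {B}) p') = dim R"
      unfolding F3 by (rule dim_image_eq[OF linear_proj]) (simp only: span_eq_iff[THEN iffD2, OF sR] inj)
    then have g: "genus UNIV p = genus (UNIV - {B}) p'"
      unfolding genus_def HR by simp
    have bij: "bij_betw (proj B) (Hsp UNIV p) (Hsp (UNIV - {B}) p')"
      unfolding HR F3 using inj by (simp add: bij_betw_def)
    have form: "omega_form (UNIV - {B}) p' (proj B h1) (proj B h2) = omega_form UNIV p h1 h2"
      if h1: "h1 \<in> Hsp UNIV p" and h2: "h2 \<in> Hsp UNIV p" for h1 h2
    proof -
      obtain u1 where u1: "u1 \<in> vecs (UNIV - {B})" "Omega UNIV p u1 = h1"
        using h1 F1 HR by (metis imageE)
      obtain w2 where w2: "w2 \<in> vecs (UNIV - {B})" "Omega UNIV p w2 = h2"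
        using h2 F1 HR by (metis imageE)
      have u1B: "u1 $ B = 0" using u1(1) by (simp add: vecs_def)
      have "omega_form UNIV p h1 h2 = u1 \<bullet> h2"
        by (rule omega_form_eq[of u1 UNIV p h1 w2 h2]) (use u1 w2 in \<open>auto simp: vecs_def\<close>)
      moreover have "omega_form (UNIV - {B}) p' (proj B h1) (proj B h2) = u1 \<bullet> proj B h2"
        by (rule omega_form_eq[of u1 "UNIV - {B}" p' "proj B h1" w2 "proj B h2"])
           (use u1 w2 Omega_remove[OF inj0 inj1] in \<open>auto simp: p'_def\<close>)
      moreover have "u1 \<bullet> proj B h2 = u1 \<bullet> h2"
        unfolding inner_vec_def by (rule sum.cong) (auto simp: proj_def u1B)
      ultimately show ?thesis by simp
    qed
    show ?thesis using g bij form HR False by auto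
  qed
then show ?thesis unfolding p'_def eB_def R_def R0_def .
qed

end
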